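(* Let $0<\delta<1/\mathrm{e}$ and $\beta>0$, and let $k,m,w$ be positive integers with $m\le w$ and $k\ge m\ge \frac{2\mathrm{e}}{(1-\mathrm{e}\delta)^2}\left(1+\left(\beta+\tfrac12\right)\ln k\right)$. If $m$ balls are thrown independently and uniformly at random into $w$ bins, then the probability that the number of bins containing exactly one ball is less than $\delta m$ is at most $k^{-\beta}$. *)

theory Defs
  imports "HOL-Probability.Probability"
begin

definition balls_into_bins :: "nat \<Rightarrow> nat \<Rightarrow> (nat \<Rightarrow> nat) pmf" where
  "balls_into_bins m w = pmf_of_set ({..<m} \<rightarrow>\<^sub>E {..<w})"

definition singleton_bins :: "nat \<Rightarrow> nat \<Rightarrow> (nat \<Rightarrow> nat) \<Rightarrow> nat" where
  "singleton_bins m w f = card {b \<in> {..<w}. card {i \<in> {..<m}. f i = b} = 1}"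

end

theory Submission imports Defs begin

lemma exp_partial_le:
  fixes l :: real assumes "0 \<le> l"
  shows "(\<Sum>n\<le>k. l ^ n / fact n) \<le> exp l"
  using assms summable_exp_generic[of l]
  by (auto simp: exp_def divide_inverse ac_simps intro!: sum_le_suminf)

lemma ln_diff_ge:
  fixes a b :: real assumes "0 < a" "a \<le> b"
  shows "2 * (b - a) / (a + b) \<le> ln b - ln a"
proof -
  let ?f = "\<lambda>x. ln x - ln a - 2 * (x - a) / (a + x)"
  have "?f a \<le> ?f b"
  proof (rule DERIV_nonneg_imp_nondecreasing[OF assms(2)])
    fix x assume x: "a \<le> x" "x \<le> b"
    hence xp: "x > 0" using assms by auto
    have "DERIV ?f x :> (1/x - 0 - (2 * (a + x) - 2 * (x - a)) / (a + x)^2)"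
      using xp assms by (auto intro!: derivative_eq_intros simp: power2_eq_square)
    moreover have "1/x - 0 - (2 * (a + x) - 2 * (x - a)) / (a + x)^2 = (x - a)^2 / (x * (a+x)^2)"
      using xp assms by (simp add: divide_simps power2_eq_square) (simp add: algebra_simps)
    moreover have "(x - a)^2 / (x * (a+x)^2) \<ge> 0" using xp by simp
    ultimately show "\<exists>y. DERIV ?f x :> y \<and> y \<ge> 0" by metis
  qed
  thus ?thesis by simp
qed

lemma ln_ge_half:
  fixes x :: real assumes "0 < x" "x \<le> 1"
  shows "(x - 1/x) / 2 \<le> ln x"
proof -
  let ?f = "\<lambda>x. ln x - (x - 1/x) / 2"
  have "?f x \<ge> ?f 1"
  proof (rule DERIV_nonpos_imp_nonincreasing[OF assms(2)])
    fix y assume y: "x \<le> y" "y \<le> 1"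
    hence yp: "y > 0" using assms by auto
    have "DERIV ?f y :> (1/y - (1 + 1/y^2) / 2)"
      using yp by (auto intro!: derivative_eq_intros simp: power2_eq_square field_simps)
    moreover have "1/y - (1 + 1/y^2) / 2 = - ((y - 1)^2 / (2 * y^2))"
      using yp by (simp add: field_simps power2_eq_square)
    moreover have "- ((y - 1)^2 / (2 * y^2)) \<le> 0" by simp
    ultimately show "\<exists>z. DERIV ?f y :> z \<and> z \<le> 0" by metis
  qed
  thus ?thesis by simp
qed

lemma stirling_ub:
  assumes "m \<ge> 1"
  shows "ln (fact m) + real m - real m * ln (real m) \<le> 1 + ln (real m) / 2"
  using assms
proof (induction m rule: nat_induct_at_least)
  case base
  then show ?case by simp
next
  case (Suc n)
  have L: "2 * (real (Suc n) - real n) / (real n + real (Suc n)) \<le> ln (real (Suc n)) - ln (real n)"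
    using Suc by (intro ln_diff_ge) auto
  have e: "2 * (real (Suc n) - real n) / (real n + real (Suc n)) = 2 / (2 * real n + 1)" by simp
  have "(real n + 1/2) * (2 / (2 * real n + 1)) \<le> (real n + 1/2) * (ln (real (Suc n)) - ln (real n))"
    using L e by (intro mult_left_mono) auto
  moreover have "(real n + 1/2) * (2 / (2 * real n + 1)) = 1" by (simp add: field_simps)
  moreover have "ln (fact (Suc n)) = ln (real (Suc n)) + ln (fact n)"
    by (simp add: ln_mult del: of_nat_Suc)
  ultimately show ?case using Suc.IH by (simp add: algebra_simps)
qed


definition cnt :: "nat set \<Rightarrow> (nat \<Rightarrow> nat) \<Rightarrow> nat \<Rightarrow> nat" where
  "cnt B f b = card {i\<in>B. f i = b}"

definition Q :: "(nat \<Rightarrow> real) \<Rightarrow> nat set \<Rightarrow> nat \<Rightarrow> real" where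
  "Q g B w = (\<Sum>f\<in>B \<rightarrow>\<^sub>E {..<w}. \<Prod>b<w. g (cnt B f b))"

lemma Q_rec:
  assumes "finite B"
  shows "Q g B (Suc w) = (\<Sum>S\<in>Pow B. g (card S) * Q g (B - S) w)"
proof -
  let ?T = "Sigma (Pow B) (\<lambda>S. (B - S) \<rightarrow>\<^sub>E {..<w})"
  let ?mg = "\<lambda>(S, h). (\<lambda>x. if x \<in> S then w else h x)"
  let ?sp = "\<lambda>f. ({i\<in>B. f i = w}, restrict f (B - {i\<in>B. f i = w}))"
  have "(\<Sum>S\<in>Pow B. g (card S) * Q g (B - S) w) =
        (\<Sum>(S,h)\<in>?T. g (card S) * (\<Prod>b<w. g (cnt (B - S) h b)))"
    unfolding Q_def sum_distrib_left using assms
    by (subst sum.Sigma) (auto intro: finite_PiE)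
  also have "\<dots> = (\<Sum>f\<in>B \<rightarrow>\<^sub>E {..<Suc w}. \<Prod>b<Suc w. g (cnt B f b))"
  proof (rule sum.reindex_bij_witness[where i = ?sp and j = ?mg])
    fix a assume a: "a \<in> ?T"
    then obtain S h where ah: "a = (S, h)" "S \<subseteq> B" "h \<in> (B - S) \<rightarrow>\<^sub>E {..<w}" by auto
    have hw: "x \<in> B - S \<Longrightarrow> h x < w" for x using ah(3) by auto
    have hu: "x \<notin> B - S \<Longrightarrow> h x = undefined" for x using ah(3) by auto
    have S1: "{i\<in>B. ?mg a i = w} = S" using ah hw by force
    show "?sp (?mg a) = a" unfolding S1 using ah hu by (auto simp: S1 restrict_def fun_eq_iff)
    show "?mg a \<in> B \<rightarrow>\<^sub>E {..<Suc w}" using ah hw hu by (auto simp: PiE_def extensional_def less_Suc_eq)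
    have c1: "cnt B (?mg a) w = card S" unfolding cnt_def using S1 by simp
    have c2: "cnt B (?mg a) b = cnt (B - S) h b" if "b < w" for b
      unfolding cnt_def using ah that by (intro arg_cong[where f=card]) auto
    show "(\<Prod>b<Suc w. g (cnt B (?mg a) b)) = (case a of (S, h) \<Rightarrow> g (card S) * (\<Prod>b<w. g (cnt (B - S) h b)))"
      using c1 c2 ah(1) by (simp add: lessThan_Suc prod.insert)
  next
    fix f assume f: "f \<in> B \<rightarrow>\<^sub>E {..<Suc w}"
    show "?mg (?sp f) = f" using f by (auto simp: fun_eq_iff PiE_def extensional_def)
    show "?sp f \<in> ?T" using f by (auto simp: PiE_def extensional_def less_Suc_eq)
  qed
  finally show ?thesis unfolding Q_def by simp
qed


lemma sum_Pow_card:
  fixes \<phi> :: "nat \<Rightarrow> real"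
  assumes "finite B"
  shows "(\<Sum>S\<in>Pow B. \<phi> (card S)) = (\<Sum>j\<le>card B. real (card B choose j) * \<phi> j)"
proof -
  have "(\<Sum>S\<in>Pow B. \<phi> (card S)) = (\<Sum>j\<le>card B. \<Sum>S\<in>{S\<in>Pow B. card S = j}. \<phi> (card S))"
    using assms by (intro sum.group[symmetric]) (auto intro: card_mono)
  also have "\<dots> = (\<Sum>j\<le>card B. real (card B choose j) * \<phi> j)"
  proof (rule sum.cong[OF refl])
    fix j assume "j \<in> {..card B}"
    have "(\<Sum>S\<in>{S\<in>Pow B. card S = j}. \<phi> (card S)) = (\<Sum>S\<in>{S\<in>Pow B. card S = j}. \<phi> j)"
      by (rule sum.cong) auto
    also have "\<dots> = real (card {S. S \<subseteq> B \<and> card S = j}) * \<phi> j" by simp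
    also have "\<dots> = real (card B choose j) * \<phi> j" using n_subsets[OF assms] by simp
    finally show "(\<Sum>S\<in>{S\<in>Pow B. card S = j}. \<phi> (card S)) = real (card B choose j) * \<phi> j" .
  qed
  finally show ?thesis .
qed

lemma Q_nonneg: "(\<And>c. g c \<ge> 0) \<Longrightarrow> Q g B w \<ge> 0"
  unfolding Q_def by (intro sum_nonneg prod_nonneg) auto

lemma Q_bound:
  assumes "finite B" "\<And>c. g c \<ge> 0" "l > 0" "\<And>n. (\<Sum>j\<le>n. g j * l ^ j / fact j) \<le> G"
  shows "Q g B w * l ^ card B / fact (card B) \<le> G ^ w"
  using assms(1)
proof (induction w arbitrary: B)
  case 0
  have "Q g B 0 = real (card (B \<rightarrow>\<^sub>E ({}::nat set)))" unfolding Q_def by simp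
  also have "\<dots> = (if B = {} then 1 else 0)" using 0 by (simp add: card_PiE card_gt_0_iff)
  finally show ?case by simp
next
  case (Suc w)
  define n where "n = card B"
  let ?\<phi> = "\<lambda>j. g j * l ^ j * fact (n - j) / fact n"
  have "Q g B (Suc w) * l ^ n / fact n = (\<Sum>S\<in>Pow B. g (card S) * Q g (B - S) w * l ^ n / fact n)"
    by (simp add: Q_rec Suc.prems sum_distrib_right sum_divide_distrib)
  also have "\<dots> \<le> (\<Sum>S\<in>Pow B. G ^ w * ?\<phi> (card S))"
  proof (rule sum_mono)
    fix S assume S: "S \<in> Pow B"
    define s where "s = card S"
    have sn: "s \<le> n" unfolding s_def n_def using S Suc.prems by (auto intro: card_mono)
    have cBS: "card (B - S) = n - s" unfolding s_def n_def using S Suc.prems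
      by (simp add: card_Diff_subset finite_subset)
    have IH: "Q g (B - S) w * l ^ (n - s) / fact (n - s) \<le> G ^ w"
      using Suc.IH[of "B - S"] Suc.prems cBS by simp
    hence IH': "Q g (B - S) w \<le> G ^ w * fact (n - s) / l ^ (n - s)"
      using assms(3) by (simp add: field_simps)
    have ln: "l ^ n = l ^ s * l ^ (n - s)" using sn by (simp flip: power_add)
    have "g s * Q g (B - S) w * l ^ n / fact n \<le> g s * (G ^ w * fact (n - s) / l ^ (n - s)) * l ^ n / fact n"
      using IH' assms(2,3) by (intro divide_right_mono mult_right_mono mult_left_mono) auto
    also have "\<dots> = G ^ w * ?\<phi> s" using assms(3) unfolding ln by (simp add: field_simps)
    finally show "g (card S) * Q g (B - S) w * l ^ n / fact n \<le> G ^ w * ?\<phi> (card S)"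
      unfolding s_def .
  qed
  also have "\<dots> = G ^ w * (\<Sum>j\<le>n. real (n choose j) * ?\<phi> j)"
    unfolding sum_distrib_left[symmetric] using sum_Pow_card[OF Suc.prems, of ?\<phi>]
    by (simp add: n_def)
  also have "(\<Sum>j\<le>n. real (n choose j) * ?\<phi> j) = (\<Sum>j\<le>n. g j * l ^ j / fact j)"
  proof (rule sum.cong[OF refl])
    fix j assume "j \<in> {..n}"
    hence "j \<le> n" by simp
    thus "real (n choose j) * ?\<phi> j = g j * l ^ j / fact j"
      by (simp add: binomial_fact field_simps)
  qed
  also have "G ^ w * (\<Sum>j\<le>n. g j * l ^ j / fact j) \<le> G ^ w * G"
  proof (rule mult_left_mono[OF assms(4)])
    have "0 \<le> (\<Sum>j\<le>0. g j * l ^ j / fact j)" using assms(2) by simp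
    hence "G \<ge> 0" using assms(4)[of 0] by linarith
    thus "0 \<le> G ^ w" by simp
  qed
  finally show ?case unfolding n_def by (simp add: mult.commute)
qed


theorem mainTheorem2:
  fixes \<delta> \<beta> :: real and k m w :: nat
  assumes "0 < \<delta>" and "\<delta> < 1 / exp 1" and "\<beta> > 0"
    and "k > 0" and "m > 0" and "w > 0" and "m \<le> w" and "m \<le> k"
    and "real m \<ge> 2 * exp 1 / (1 - exp 1 * \<delta>)^2 * (1 + (\<beta> + 1/2) * ln (real k))"
  shows "measure_pmf.prob (balls_into_bins m w)
           {f. real (singleton_bins m w f) < \<delta> * real m} \<le> real k powr (- \<beta>)"
proof -
  define x where "x = exp 1 * \<delta>"
  define l where "l = real m / real w"
  define g where "g = (\<lambda>c::nat. if c = 1 then x else 1)"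
  define G where "G = exp l - (1 - x) * l"
  define a where "a = \<delta> * real m"
  define PS where "PS = {..<m} \<rightarrow>\<^sub>E {..<w}"
  define E where "E = {f. real (singleton_bins m w f) < \<delta> * real m}"
  have x0: "0 < x" and x1: "x < 1" unfolding x_def using assms(1,2) by (auto simp: field_simps)
  have l0: "0 < l" and l1: "l \<le> 1" unfolding l_def using assms(5,6,7) by auto
  have g0: "\<And>c. g c \<ge> 0" unfolding g_def using x0 by auto
  have G1: "G \<ge> 1"
  proof -
    have "1 + l \<le> exp l" by (rule exp_ge_add_one_self)
    moreover have "(1 - x) * l \<le> l" using x0 l0 by (simp add: mult_le_cancel_right1)
    ultimately show ?thesis unfolding G_def by linarith
  qed
  have hyp: "(\<Sum>j\<le>n. g j * l ^ j / fact j) \<le> G" for n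
  proof (cases "n = 0")
    case True thus ?thesis using G1 by (simp add: g_def)
  next
    case False
    have "(\<Sum>j\<le>n. g j * l ^ j / fact j) = (\<Sum>j\<le>n. l ^ j / fact j - (if j = 1 then (1 - x) * l else 0))"
      by (rule sum.cong) (auto simp: g_def field_simps)
    also have "\<dots> = (\<Sum>j\<le>n. l ^ j / fact j) - (1 - x) * l"
      using False by (simp add: sum_subtractf)
    also have "\<dots> \<le> G" unfolding G_def using exp_partial_le[of l n] l0 by simp
    finally show ?thesis .
  qed
  have QB: "Q g {..<m} w * l ^ m / fact m \<le> G ^ w"
    using Q_bound[of "{..<m}" g l G w] g0 l0 hyp by simp
  have Qeq: "Q g {..<m} w = (\<Sum>f\<in>PS. x ^ singleton_bins m w f)"
    unfolding Q_def PS_def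
  proof (rule sum.cong[OF refl])
    fix f
    have "(\<Prod>b<w. g (cnt {..<m} f b)) = (\<Prod>b\<in>{..<w} \<inter> {b. cnt {..<m} f b = 1}. x) * (\<Prod>b\<in>{..<w} \<inter> - {b. cnt {..<m} f b = 1}. 1)"
      unfolding g_def by (subst prod.If_cases) (auto intro: prod.cong)
    also have "\<dots> = x ^ singleton_bins m w f"
      unfolding singleton_bins_def cnt_def by (simp, intro arg_cong[where f="\<lambda>n. x ^ n"] arg_cong[where f=card]) auto
    finally show "(\<Prod>b<w. g (cnt {..<m} f b)) = x ^ singleton_bins m w f" .
  qed
  have finPS: "finite PS" and nePS: "PS \<noteq> {}" unfolding PS_def using assms(6)
    by (auto simp: finite_PiE PiE_eq_empty_iff)
  have cardPS: "card PS = w ^ m" unfolding PS_def by (simp add: card_PiE)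
  have P: "measure_pmf.prob (balls_into_bins m w) E = real (card (PS \<inter> E)) / real w ^ m"
    unfolding balls_into_bins_def PS_def[symmetric] using finPS nePS cardPS
    by (simp add: measure_pmf_of_set)
  have "real (card (PS \<inter> E)) = (\<Sum>f\<in>PS \<inter> E. 1)" by simp
  also have "\<dots> \<le> (\<Sum>f\<in>PS \<inter> E. x powr (real (singleton_bins m w f) - a))"
  proof (rule sum_mono)
    fix f assume "f \<in> PS \<inter> E"
    hence "real (singleton_bins m w f) - a \<le> 0" unfolding E_def a_def by auto
    moreover have "ln x \<le> 0" using x0 x1 by simp
    ultimately have "0 \<le> (real (singleton_bins m w f) - a) * ln x" by (simp add: mult_nonpos_nonpos)
    thus "1 \<le> x powr (real (singleton_bins m w f) - a)" using x0 by (simp add: powr_def)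
  qed
  also have "\<dots> \<le> (\<Sum>f\<in>PS. x powr (real (singleton_bins m w f) - a))"
    using finPS by (intro sum_mono2) auto
  also have "\<dots> = x powr (- a) * (\<Sum>f\<in>PS. x ^ singleton_bins m w f)"
    unfolding sum_distrib_left using x0
    by (intro sum.cong) (auto simp: powr_diff powr_realpow powr_minus field_simps)
  finally have P1: "measure_pmf.prob (balls_into_bins m w) E \<le> x powr (- a) * (Q g {..<m} w / real w ^ m)"
    unfolding P Qeq using assms(6) by (simp add: divide_right_mono)
  have lw: "l ^ m * real w ^ m = real m ^ m" unfolding l_def using assms(6)
    by (simp flip: power_mult_distrib)
  have P2: "Q g {..<m} w / real w ^ m \<le> G ^ w * (fact m / real m ^ m)"
  proof -
    have "Q g {..<m} w \<le> G ^ w * fact m / l ^ m" using QB l0 by (simp add: field_simps)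
    hence "Q g {..<m} w / real w ^ m \<le> G ^ w * fact m / l ^ m / real w ^ m"
      using assms(6) by (intro divide_right_mono) auto
    also have "\<dots> = G ^ w * (fact m / real m ^ m)" using lw[symmetric] by simp
    finally show ?thesis .
  qed
  have G2: "G ^ w \<le> exp (real m - (1 - x) * real m * exp (-1))"
  proof -
    have "G = exp l * (1 - (1 - x) * l * exp (- l))" unfolding G_def by (simp add: field_simps exp_minus)
    also have "\<dots> \<le> exp l * exp (- ((1 - x) * l * exp (- l)))"
      using exp_ge_add_one_self[of "- ((1 - x) * l * exp (- l))"] by (intro mult_left_mono) auto
    also have "\<dots> = exp (l - (1 - x) * l * exp (- l))" by (simp add: exp_add[symmetric])
    finally have "G ^ w \<le> exp (l - (1 - x) * l * exp (- l)) ^ w" using G1 by (intro power_mono) auto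
    also have "\<dots> = exp (real w * (l - (1 - x) * l * exp (- l)))" by (simp add: exp_of_nat_mult)
    also have "\<dots> = exp (real m - (1 - x) * real m * exp (- l))" unfolding l_def using assms(6)
      by (simp add: field_simps)
    also have "\<dots> \<le> exp (real m - (1 - x) * real m * exp (-1))"
      using l1 x1 by (auto intro!: mult_left_mono)
    finally show ?thesis .
  qed
  have F: "fact m / real m ^ m \<le> exp (1 + ln (real m) / 2 - real m)"
  proof -
    have s: "ln (fact m) \<le> 1 + ln (real m) / 2 - real m + real m * ln (real m)"
      using stirling_ub[of m] assms(5) by simp
    have "(fact m :: real) = exp (ln (fact m))" by (rule exp_ln[symmetric]) simp
    also have "\<dots> \<le> exp (1 + ln (real m) / 2 - real m + real m * ln (real m))" using s by (subst exp_le_cancel_iff) 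
    also have "\<dots> = exp (1 + ln (real m) / 2 - real m) * real m ^ m"
      using assms(5) by (simp add: exp_add exp_of_nat_mult)
    finally show ?thesis using assms(5) by (simp add: field_simps)
  qed
  define T where "T = - a * ln x + (real m - (1 - x) * real m * exp (-1)) + (1 + ln (real m) / 2 - real m)"
  have "measure_pmf.prob (balls_into_bins m w) E \<le> x powr (- a) * (G ^ w * (fact m / real m ^ m))"
    using P1 P2 x0 by (meson order_trans mult_left_mono powr_ge_zero)
  also have "\<dots> \<le> exp (- a * ln x) * (exp (real m - (1 - x) * real m * exp (-1)) * exp (1 + ln (real m) / 2 - real m))"
    using G2 F x0 G1 by (intro mult_mono) (auto simp: powr_def)
  also have "\<dots> = exp T" unfolding T_def by (simp only: exp_add[symmetric] add.assoc)
  also have "\<dots> \<le> exp (- \<beta> * ln (real k))"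
  proof -
    have ax: "a = real m * exp (-1) * x" unfolding a_def x_def by (simp add: exp_minus field_simps)
    have lnx: "(x - 1/x) / 2 \<le> ln x" using ln_ge_half x0 x1 by simp
    have "x * ((x - 1/x) / 2) \<le> x * ln x" using lnx x0 by (intro mult_left_mono) auto
    moreover have "x * ((x - 1/x) / 2) = (x^2 - 1) / 2" using x0 by (simp add: field_simps power2_eq_square)
    ultimately have xl: "(x^2 - 1) / 2 \<le> x * ln x" by simp
    have e0: "real m * exp (-1) \<ge> 0" by simp
    have "- a * ln x \<le> - (real m * exp (-1)) * ((x^2 - 1) / 2)"
      unfolding ax using mult_left_mono[OF xl e0] by (simp add: algebra_simps)
    moreover have "- (real m * exp (-1)) * ((x^2 - 1) / 2) - (1 - x) * real m * exp (-1)
       = - (real m * exp (-1) * (1 - x)^2 / 2)" by (simp add: power2_eq_square field_simps)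
    ultimately have T1: "T \<le> 1 + ln (real m) / 2 - real m * exp (-1) * (1 - x)^2 / 2"
      unfolding T_def by linarith
    have ex: "1 - exp 1 * \<delta> = 1 - x" unfolding x_def ..
    have px: "(1 - x)^2 > 0" using x1 by simp
    have "2 * exp 1 / (1 - x)^2 * (1 + (\<beta> + 1/2) * ln (real k)) \<le> real m" using assms(9) ex by simp
    hence "(1 + (\<beta> + 1/2) * ln (real k)) \<le> real m * (1 - x)^2 / (2 * exp 1)"
      using px by (simp add: field_simps)
    hence T2: "real m * exp (-1) * (1 - x)^2 / 2 \<ge> 1 + (\<beta> + 1/2) * ln (real k)"
      by (simp add: exp_minus field_simps)
    have "ln (real m) \<le> ln (real k)" using assms(5,8) by simp
    hence "T \<le> - \<beta> * ln (real k)" using T1 T2 by (simp add: algebra_simps)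
    thus ?thesis by simp
  qed
  also have "\<dots> = real k powr (- \<beta>)" using assms(4) by (simp add: powr_def)
  finally show ?thesis unfolding E_def .
qed

end
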